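(* For every $n\ge1$, the number of layers on $n$ channels that are in last layer normal form is $P_{n+5}$, where $(P_m)$ is the Padovan sequence defined by $P_0=1$, $P_1=P_2=0$ and $P_{m+3}=P_m+P_{m+1}$.
   Context: Channels are numbered $1,\ldots,n$. A layer on $n$ channels is a set of comparators $(i,j)$ with $1\le i<j\le n$ such that each channel occurs in at most one comparator of the layer. A channel is used in a layer if it occurs in some comparator of that layer. A layer is in last layer normal form if (i) every comparator in it is of the form $(i,i+1)$, and (ii) there is no $i$ with $1\le i<n$ such that both channels $i$ and $i+1$ are unused in the layer. *)

theory Defs
  imports Main
begin

definition is_layer :: "nat \<Rightarrow> (nat \<times> nat) set \<Rightarrow> bool" where
  "is_layer n L \<longleftrightarrow>
     (\<forall>(i, j) \<in> L. 1 \<le> i \<and> i < j \<and> j \<le> n) \<and>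
     (\<forall>c\<in>L. \<forall>d\<in>L. c \<noteq> d \<longrightarrow> {fst c, snd c} \<inter> {fst d, snd d} = {})"

definition used :: "(nat \<times> nat) set \<Rightarrow> nat \<Rightarrow> bool" where
  "used L k \<longleftrightarrow> (\<exists>(i, j) \<in> L. k = i \<or> k = j)"

definition last_layer_nf :: "nat \<Rightarrow> (nat \<times> nat) set \<Rightarrow> bool" where
  "last_layer_nf n L \<longleftrightarrow>
     (\<forall>(i, j) \<in> L. j = i + 1) \<and>
     \<not> (\<exists>i. 1 \<le> i \<and> i < n \<and> \<not> used L i \<and> \<not> used L (i + 1))"

fun padovan :: "nat \<Rightarrow> nat" where
  "padovan 0 = 1"
| "padovan (Suc 0) = 0"
| "padovan (Suc (Suc 0)) = 0"
| "padovan (Suc (Suc (Suc m))) = padovan m + padovan (Suc m)"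

end

theory Submission
  imports Defs
begin

abbreviation V :: "nat \<Rightarrow> (nat \<times> nat) set set" where
  "V n \<equiv> {L. is_layer n L \<and> last_layer_nf n L}"

lemma V_fin: "finite (V n)"
proof -
  have "V n \<subseteq> Pow ({1..n} \<times> {1..n})"
    by (auto simp: is_layer_def)
  then show ?thesis by (rule finite_subset) auto
qed

lemma V0: "V 0 = {{}}"
  by (auto simp: is_layer_def last_layer_nf_def used_def)

lemma V1: "V 1 = {{}}"
  by (auto simp: is_layer_def last_layer_nf_def used_def)

lemma V2: "V 2 = {{(1,2)}}"
proof -
  have "L = {(1,2)}" if "L \<in> V 2" for L
  proof -
    have sub: "L \<subseteq> {(1,2)}" using that by (auto simp: is_layer_def)
    have "L \<noteq> {}" using that by (auto simp: last_layer_nf_def used_def dest: spec[of _ 1])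
    then show ?thesis using sub by blast
  qed
  moreover have "{(1::nat,2::nat)} \<in> V 2"
    by (auto simp: is_layer_def last_layer_nf_def used_def)
  ultimately show ?thesis by blast
qed

lemma layer_insert:
  assumes "is_layer k L" "k < a" "a < b" "b \<le> n" "1 \<le> a"
  shows "is_layer n (insert (a,b) L)"
proof -
  have lay: "\<forall>(i, j) \<in> L. 1 \<le> i \<and> i < j \<and> j \<le> k"
    and dis: "\<forall>c\<in>L. \<forall>d\<in>L. c \<noteq> d \<longrightarrow> {fst c, snd c} \<inter> {fst d, snd d} = {}"
    using assms(1) by (auto simp: is_layer_def)
  have 1: "\<forall>(i, j) \<in> insert (a,b) L. 1 \<le> i \<and> i < j \<and> j \<le> n"
    using lay assms by fastforce
  have 2: "{fst c, snd c} \<inter> {a, b} = {}" if "c \<in> L" for c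
    using lay that assms by (cases c) fastforce
  have 3: "\<forall>c\<in>insert (a,b) L. \<forall>d\<in>insert (a,b) L. c \<noteq> d \<longrightarrow> {fst c, snd c} \<inter> {fst d, snd d} = {}"
    using dis 2 by (simp add: Int_commute) blast
  show ?thesis using 1 3 by (simp add: is_layer_def)
qed

lemma layer_remove:
  assumes "is_layer n L" "\<And>i j. (i,j) \<in> L \<Longrightarrow> (i,j) \<noteq> x \<Longrightarrow> j \<le> k"
  shows "is_layer k (L - {x})"
  using assms unfolding is_layer_def by fastforce

lemma pairV: "L \<in> V n \<Longrightarrow> (i,j) \<in> L \<Longrightarrow> 1 \<le> i \<and> j = i + 1 \<and> j \<le> n"
  unfolding is_layer_def last_layer_nf_def by fastforce

lemma shareV: "L \<in> V n \<Longrightarrow> (i,j) \<in> L \<Longrightarrow> (i',j') \<in> L \<Longrightarrow> (i,j) \<noteq> (i',j') \<Longrightarrow> j \<noteq> i'"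
proof -
  assume "L \<in> V n" "(i,j) \<in> L" "(i',j') \<in> L" "(i,j) \<noteq> (i',j')"
  hence "{fst (i,j), snd (i,j)} \<inter> {fst (i',j'), snd (i',j')} = {}"
    unfolding is_layer_def by blast
  thus "j \<noteq> i'" by auto
qed

lemma nfV: "L \<in> V n \<Longrightarrow> 1 \<le> i \<Longrightarrow> i < n \<Longrightarrow> used L i \<or> used L (i+1)"
  unfolding last_layer_nf_def by blast

lemma nf_intro:
  assumes "\<forall>(i, j) \<in> L. j = i + 1"
    "\<And>i. 1 \<le> i \<Longrightarrow> i < n \<Longrightarrow> used L i \<or> used L (i+1)"
  shows "last_layer_nf n L"
  using assms unfolding last_layer_nf_def by blast

lemma used_remove: "used L k \<Longrightarrow> \<not> used {x} k \<Longrightarrow> used (L - {x}) k"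
  unfolding used_def by blast

lemma used_insert: "used L k \<Longrightarrow> used (insert x L) k"
  unfolding used_def by blast

lemma Vrec: "V (m+3) = insert (m+2,m+3) ` V (m+1) \<union> insert (m+1,m+2) ` V m"
proof (intro equalityI subsetI)
  fix L assume L: "L \<in> V (m+3)"
  show "L \<in> insert (m+2,m+3) ` V (m+1) \<union> insert (m+1,m+2) ` V m"
  proof (cases "used L (m+3)")
    case True
    then obtain i j where ij: "(i,j) \<in> L" "m+3 = i \<or> m+3 = j" by (auto simp: used_def)
    have "1 \<le> i \<and> j = i + 1 \<and> j \<le> m+3" using pairV[OF L ij(1)] .
    hence "i = m+2" "j = m+3" using ij(2) by auto
    with ij have inL: "(m+2,m+3) \<in> L" by simp
    define L' where "L' = L - {(m+2,m+3)}"
    have "is_layer (m+1) L'" unfolding L'_def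
    proof (rule layer_remove)
      show "is_layer (m+3) L" using L by simp
      fix a b assume ab: "(a,b) \<in> L" "(a,b) \<noteq> (m+2,m+3)"
      have p: "1 \<le> a \<and> b = a + 1 \<and> b \<le> m+3" using pairV[OF L ab(1)] .
      have "b \<noteq> m+2" using shareV[OF L ab(1) inL ab(2)] by simp
      thus "b \<le> m+1" using p ab(2) by auto
    qed
    moreover have "last_layer_nf (m+1) L'"
    proof (rule nf_intro)
      show "\<forall>(i, j) \<in> L'. j = i + 1" using pairV[OF L] unfolding L'_def by auto
      fix k assume k: "1 \<le> k" "k < m+1"
      have "used L k \<or> used L (k+1)" using nfV[OF L k(1)] k by simp
      moreover have "\<not> used {(m+2,m+3)} k" "\<not> used {(m+2,m+3)} (k+1)" using k by (auto simp: used_def)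
      ultimately show "used L' k \<or> used L' (k+1)" unfolding L'_def using used_remove by blast
    qed
    moreover have "L = insert (m+2,m+3) L'" using inL by (auto simp: L'_def)
    ultimately show ?thesis by blast
  next
    case False
    have "used L (m+2) \<or> used L (m+2+1)" using nfV[OF L, of "m+2"] by simp
    moreover have eq: "m+2+1 = m+3" by simp
    ultimately have "used L (m+2) \<or> used L (m+3)" by metis
    hence "used L (m+2)" using False by simp
    then obtain i j where ij: "(i,j) \<in> L" "m+2 = i \<or> m+2 = j" by (auto simp: used_def)
    have "1 \<le> i \<and> j = i + 1 \<and> j \<le> m+3" using pairV[OF L ij(1)] .
    moreover have "j \<noteq> m+3" using False ij(1) by (auto simp: used_def)
    ultimately have "i = m+1" "j = m+2" using ij(2) by auto
    with ij have inL: "(m+1,m+2) \<in> L" by simp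
    define L' where "L' = L - {(m+1,m+2)}"
    have "is_layer m L'" unfolding L'_def
    proof (rule layer_remove)
      show "is_layer (m+3) L" using L by simp
      fix a b assume ab: "(a,b) \<in> L" "(a,b) \<noteq> (m+1,m+2)"
      have p: "1 \<le> a \<and> b = a + 1 \<and> b \<le> m+3" using pairV[OF L ab(1)] .
      have "b \<noteq> m+1" using shareV[OF L ab(1) inL ab(2)] by simp
      moreover have "b \<noteq> m+3" using False ab(1) by (auto simp: used_def)
      ultimately show "b \<le> m" using p ab(2) by auto
    qed
    moreover have "last_layer_nf m L'"
    proof (rule nf_intro)
      show "\<forall>(i, j) \<in> L'. j = i + 1" using pairV[OF L] unfolding L'_def by auto
      fix k assume k: "1 \<le> k" "k < m"
      have "used L k \<or> used L (k+1)" using nfV[OF L k(1)] k by simp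
      moreover have "\<not> used {(m+1,m+2)} k" "\<not> used {(m+1,m+2)} (k+1)" using k by (auto simp: used_def)
      ultimately show "used L' k \<or> used L' (k+1)" unfolding L'_def using used_remove by blast
    qed
    moreover have "L = insert (m+1,m+2) L'" using inL by (auto simp: L'_def)
    ultimately show ?thesis by blast
  qed
next
  fix L assume "L \<in> insert (m+2,m+3) ` V (m+1) \<union> insert (m+1,m+2) ` V m"
  then show "L \<in> V (m+3)"
  proof
    assume "L \<in> insert (m+2,m+3) ` V (m+1)"
    then obtain L' where L: "L = insert (m+2,m+3) L'" and L': "L' \<in> V (m+1)" by blast
    have "is_layer (m+3) L" unfolding L by (rule layer_insert[of "m+1"]) (use L' in auto)
    moreover have "last_layer_nf (m+3) L"
    proof (rule nf_intro)
      show "\<forall>(i, j) \<in> L. j = i + 1" using pairV[OF L'] unfolding L by auto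
      fix k assume k: "1 \<le> k" "k < m+3"
      show "used L k \<or> used L (k+1)"
      proof (cases "k < m+1")
        case True
        hence "used L' k \<or> used L' (k+1)" using nfV[OF L' k(1)] by blast
        thus ?thesis unfolding L by (meson used_insert)
      next
        case False
        hence "k = m+1 \<or> k = m+2" using k by arith
        thus ?thesis unfolding L used_def by auto
      qed
    qed
    ultimately show ?thesis by blast
  next
    assume "L \<in> insert (m+1,m+2) ` V m"
    then obtain L' where L: "L = insert (m+1,m+2) L'" and L': "L' \<in> V m" by blast
    have "is_layer (m+3) L" unfolding L by (rule layer_insert[of m]) (use L' in auto)
    moreover have "last_layer_nf (m+3) L"
    proof (rule nf_intro)
      show "\<forall>(i, j) \<in> L. j = i + 1" using pairV[OF L'] unfolding L by auto
      fix k assume k: "1 \<le> k" "k < m+3"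
      show "used L k \<or> used L (k+1)"
      proof (cases "k < m")
        case True
        hence "used L' k \<or> used L' (k+1)" using nfV[OF L' k(1)] by blast
        thus ?thesis unfolding L by (meson used_insert)
      next
        case False
        hence "k = m \<or> k = m+1 \<or> k = m+2" using k by arith
        thus ?thesis unfolding L used_def by auto
      qed
    qed
    ultimately show ?thesis by blast
  qed
qed

lemma card_rec: "card (V (m+3)) = card (V (m+1)) + card (V m)"
proof -
  have i1: "inj_on (insert (m+2,m+3)) (V (m+1))"
  proof (rule inj_onI)
    fix A B assume "A \<in> V (m+1)" "B \<in> V (m+1)" "insert (m+2,m+3) A = insert (m+2,m+3) B"
    moreover have "(m+2,m+3) \<notin> A" "(m+2,m+3) \<notin> B"
      using pairV[OF calculation(1), of "m+2" "m+3"] pairV[OF calculation(2), of "m+2" "m+3"] by auto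
    ultimately show "A = B" by (metis insert_ident)
  qed
  have i2: "inj_on (insert (m+1,m+2)) (V m)"
  proof (rule inj_onI)
    fix A B assume "A \<in> V m" "B \<in> V m" "insert (m+1,m+2) A = insert (m+1,m+2) B"
    moreover have "(m+1,m+2) \<notin> A" "(m+1,m+2) \<notin> B"
      using pairV[OF calculation(1), of "m+1" "m+2"] pairV[OF calculation(2), of "m+1" "m+2"] by auto
    ultimately show "A = B" by (metis insert_ident)
  qed
  have d: "insert (m+2,m+3) ` V (m+1) \<inter> insert (m+1,m+2) ` V m = {}"
  proof (rule ccontr)
    assume "insert (m+2,m+3) ` V (m+1) \<inter> insert (m+1,m+2) ` V m \<noteq> {}"
    then obtain A B where A: "A \<in> V (m+1)" and B: "B \<in> V m"
      and e: "insert (m+2,m+3) A = insert (m+1,m+2) B" by blast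
    have "(m+2,m+3) \<in> insert (m+1,m+2) B" using e[symmetric] by blast
    hence "(m+2,m+3) \<in> B" by simp
    thus False using pairV[OF B] by force
  qed
  have "card (V (m+3)) = card (insert (m+2,m+3) ` V (m+1)) + card (insert (m+1,m+2) ` V m)"
    unfolding Vrec by (rule card_Un_disjoint[OF _ _ d]) (simp_all add: V_fin)
  also have "\<dots> = card (V (m+1)) + card (V m)"
    using card_image[OF i1] card_image[OF i2] by simp
  finally show ?thesis .
qed

lemma main: "card (V n) = padovan (n + 5)"
proof (induction n rule: less_induct)
  case (less n)
  show ?case
  proof (cases "n < 3")
    case True
    hence "n = 0 \<or> n = 1 \<or> n = 2" by arith
    moreover have "card (V 0) = padovan (0+5)" by (simp add: V0 eval_nat_numeral)
    moreover have "card (V 1) = padovan (1+5)" by (simp only: V1) (simp add: eval_nat_numeral)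
    moreover have "card (V 2) = padovan (2+5)" by (simp only: V2) (simp add: eval_nat_numeral)
    ultimately show ?thesis by auto
  next
    case False
    then obtain m where m: "n = m + 3" by (metis add.commute le_Suc_ex not_less)
    have "padovan (m + 3 + 5) = padovan (m+5) + padovan (m+1+5)"
      by (simp add: eval_nat_numeral)
    thus ?thesis using less m card_rec by simp
  qed
qed

theorem theorem3:
  fixes n :: nat
  assumes "n \<ge> 1"
  shows "card {L. is_layer n L \<and> last_layer_nf n L} = padovan (n + 5)"
  using main by simp

end
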